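(* Assume $K_1\subseteq K_2\subseteq\cdots\subseteq K_n\subseteq\mathbb F_q$ are subfields, $d_i=|K_i|$, $n\ge 2$. Let $\delta\ge 2$, $s\in\{1,\dots,n\}$ with $r:=d_s-\delta+1\ge 1$, and let $d=\sum_{i=1}^k(d_i-1)+\ell$ with $0\le k<n$ and $0<\ell\le d_{k+1}-1$. If $W^{(1)}(\mathcal D^{(\delta,s)}_{\mathcal X}(d))=W^{(1)}(\mathcal C_{\mathcal X}(d))$, then at least one of the following holds: (i) $k+2\le n$ and $d_{k+2}\le d_s$; (ii) $d_s\le d_{k+1}$ and $0\le d_s-(d_{k+1}-\ell)<r$.
   Context: $\mathcal X=K_1\times\cdots\times K_n=\{\boldsymbol\alpha_1,\dots,\boldsymbol\alpha_m\}$ (fixed enumeration), $m=\prod d_i$; $\Psi:\mathbb F_q[X_1,\dots,X_n]\to\mathbb F_q^m$, $f\mapsto(f(\boldsymbol\alpha_1),\dots,f(\boldsymbol\alpha_m))$. For $d\ge 0$, $\mathbb F_q[X_1,\dots,X_n]_{\le d}$ is the space of polynomials of degree at most $d$ together with $0$; the affine cartesian code is $\mathcal C_{\mathcal X}(d)=\Psi(\mathbb F_q[X_1,\dots,X_n]_{\le d})$. $\mathcal P^{(\delta,s)}_d$ is the set of $f\in\mathbb F_q[X_1,\dots,X_n]_{\le d}$ with $\deg_{X_s}f<d_s-\delta+1$, together with $0$, and $\mathcal D^{(\delta,s)}_{\mathcal X}(d)=\Psi(\mathcal P^{(\delta,s)}_d)$. $W^{(1)}(C)$ is the minimum Hamming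 distance of a linear code $C$. *)

theory Defs
  imports Main "HOL-Library.FuncSet"
begin

definition is_subfield :: "'a::field set \<Rightarrow> bool" where
  "is_subfield K \<longleftrightarrow> 0 \<in> K \<and> 1 \<in> K \<and>
     (\<forall>x\<in>K. \<forall>y\<in>K. x + y \<in> K \<and> x * y \<in> K) \<and>
     (\<forall>x\<in>K. - x \<in> K) \<and> (\<forall>x\<in>K. x \<noteq> 0 \<longrightarrow> inverse x \<in> K)"

definition grid :: "nat \<Rightarrow> (nat \<Rightarrow> 'a set) \<Rightarrow> (nat \<Rightarrow> 'a) set" where
  "grid n K = PiE {1..n} K"

definition monomials_le :: "nat \<Rightarrow> nat \<Rightarrow> (nat \<Rightarrow> nat) set" where
  "monomials_le n d = {e. (\<forall>i. e i \<noteq> 0 \<longrightarrow> i \<in> {1..n}) \<and> (\<Sum>i=1..n. e i) \<le> d}"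

definition evalp :: "nat \<Rightarrow> (nat \<Rightarrow> nat) set \<Rightarrow> ((nat \<Rightarrow> nat) \<Rightarrow> 'a::comm_ring_1) \<Rightarrow> (nat \<Rightarrow> 'a) \<Rightarrow> 'a" where
  "evalp n E c x = (\<Sum>e\<in>E. c e * (\<Prod>i=1..n. x i ^ e i))"

(* the evaluation code of the space of polynomials spanned by the monomials in E:
   codewords are functions on X (equivalent to vectors via the fixed enumeration) *)
definition eval_code :: "nat \<Rightarrow> (nat \<Rightarrow> 'a set) \<Rightarrow> (nat \<Rightarrow> nat) set \<Rightarrow> ((nat \<Rightarrow> 'a::comm_ring_1) \<Rightarrow> 'a) set" where
  "eval_code n K E = {(\<lambda>x\<in>grid n K. evalp n E c x) | c. True}"

definition affine_cartesian_code :: "nat \<Rightarrow> (nat \<Rightarrow> 'a set) \<Rightarrow> nat \<Rightarrow> ((nat \<Rightarrow> 'a::comm_ring_1) \<Rightarrow> 'a) set" where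
  "affine_cartesian_code n K d = eval_code n K (monomials_le n d)"

definition restricted_code :: "nat \<Rightarrow> (nat \<Rightarrow> 'a set) \<Rightarrow> nat \<Rightarrow> nat \<Rightarrow> nat \<Rightarrow> ((nat \<Rightarrow> 'a::comm_ring_1) \<Rightarrow> 'a) set" where
  "restricted_code n K \<delta> s d =
     eval_code n K {e \<in> monomials_le n d. int (e s) < int (card (K s)) - int \<delta> + 1}"

definition hamming_wt :: "(nat \<Rightarrow> 'a) set \<Rightarrow> ((nat \<Rightarrow> 'a) \<Rightarrow> 'a::zero) \<Rightarrow> nat" where
  "hamming_wt X v = card {x\<in>X. v x \<noteq> 0}"

(* minimum distance W^(1) of a linear code = minimum weight of a nonzero codeword *)
definition min_dist :: "(nat \<Rightarrow> 'a) set \<Rightarrow> ((nat \<Rightarrow> 'a) \<Rightarrow> 'a::zero) set \<Rightarrow> nat" where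
  "min_dist X C = Min {hamming_wt X v | v. v \<in> C \<and> (\<exists>x\<in>X. v x \<noteq> 0)}"

end

theory Submission
  imports Defs "HOL-Computational_Algebra.Polynomial"
begin


lemma subfield_pow1:
  fixes K :: "'a::field set"
  assumes sf: "is_subfield K" and fin: "finite K" and x: "x \<in> K" "x \<noteq> 0"
  shows "x ^ (card K - 1) = 1"
proof -
  let ?K = "K - {0}"
  have inj: "inj_on ((*) x) ?K" using x by (auto simp: inj_on_def)
  have sub: "(*) x ` ?K \<subseteq> ?K" using sf x unfolding is_subfield_def by auto
  have finK: "finite ?K" using fin by simp
  have img: "(*) x ` ?K = ?K"
    using card_subset_eq[OF finK sub] card_image[OF inj] by simp
  have "(\<Prod>y\<in>?K. y) = (\<Prod>y\<in>(*) x ` ?K. y)" using img by simp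
  also have "\<dots> = (\<Prod>y\<in>?K. x * y)" using prod.reindex[OF inj] by simp
  also have "\<dots> = x ^ card ?K * (\<Prod>y\<in>?K. y)" by (simp add: prod.distrib)
  finally have eq: "(\<Prod>y\<in>?K. y) = x ^ card ?K * (\<Prod>y\<in>?K. y)" .
  have nz: "(\<Prod>y\<in>?K. y) \<noteq> 0" using finK by simp
  have "x ^ card ?K = 1" using eq nz by (metis mult_cancel_right2)
  moreover have "card ?K = card K - 1" using sf fin unfolding is_subfield_def by simp
  ultimately show ?thesis by simp
qed

lemma subfield_card_ge2:
  fixes K :: "'a::field set"
  assumes sf: "is_subfield K" and fin: "finite K"
  shows "2 \<le> card K"
proof -
  have "{0,1} \<subseteq> K" using sf unfolding is_subfield_def by auto
  then have "card {0::'a,1} \<le> card K" using fin by (rule card_mono[rotated])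
  then show ?thesis by simp
qed

definition redx :: "nat \<Rightarrow> nat \<Rightarrow> nat" where
  "redx m e = (if e = 0 then 0 else (e - 1) mod (m - 1) + 1)"

lemma redx_le: "redx m e \<le> e"
  unfolding redx_def by (auto simp: le_diff_conv) (metis Suc_pred mod_less_eq_dividend Suc_le_mono neq0_conv)

lemma redx_lt: assumes "2 \<le> m" shows "redx m e < m"
proof -
  have "(e - 1) mod (m - 1) < m - 1" using assms by (intro mod_less_divisor) simp
  then have h: "(e - 1) mod (m - 1) + 1 < m" using assms by linarith
  show ?thesis unfolding redx_def using assms h by auto
qed

lemma redx_id: "e < m \<Longrightarrow> redx m e = e"
  unfolding redx_def by auto

lemma subfield_pow_red:
  fixes K :: "'a::field set"
  assumes sf: "is_subfield K" and fin: "finite K" and x: "x \<in> K"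
  shows "x ^ e = x ^ redx (card K) e"
proof (cases "e = 0")
  case True then show ?thesis by (simp add: redx_def)
next
  case False
  show ?thesis
  proof (cases "x = 0")
    case True then show ?thesis using False by (simp add: redx_def)
  next
    case xn: False
    have p: "x ^ (card K - 1) = 1" using subfield_pow1[OF sf fin x xn] .
    have "e = ((e - 1) div (card K - 1)) * (card K - 1) + ((e - 1) mod (card K - 1)) + 1"
      using False by (metis div_mult_mod_eq Suc_pred' neq0_conv add.commute plus_1_eq_Suc)
    then have "x ^ e = (x ^ (card K - 1)) ^ ((e - 1) div (card K - 1)) * x ^ ((e - 1) mod (card K - 1) + 1)"
      by (metis (no_types, lifting) add.assoc power_add power_mult mult.commute)
    then show ?thesis using p False by (simp add: redx_def)
  qed
qed



lemma finite_grid[simp]: "finite (grid m (K::nat \<Rightarrow> 'a::finite set))"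
  unfolding grid_def by (simp add: finite_PiE)

lemma grid_Suc_card:
  fixes K :: "nat \<Rightarrow> 'a::finite set"
  shows "card {x\<in>grid (Suc m) K. P x} = (\<Sum>x'\<in>grid m K. card {y\<in>K (Suc m). P (x'(Suc m := y))})"
proof -
  let ?N = "Suc m"
  let ?S = "SIGMA x':grid m K. {y\<in>K ?N. P (x'(?N := y))}"
  let ?h = "\<lambda>(x', y). x'(?N := y)"
  have inj: "inj_on ?h ?S"
  proof (rule inj_onI, clarify)
    fix x1 y1 x2 y2
    assume a: "x1 \<in> grid m K" "x2 \<in> grid m K" "x1(?N := y1) = x2(?N := y2)"
    have u: "x1 ?N = undefined" "x2 ?N = undefined" using a(1,2) unfolding grid_def by (auto simp: PiE_def extensional_def)
    have "y1 = y2" using fun_cong[OF a(3), of ?N] by simp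
    moreover have "x1 = x2"
    proof
      fix i show "x1 i = x2 i" using fun_cong[OF a(3), of i] u by (cases "i = ?N") auto
    qed
    ultimately show "x1 = x2 \<and> y1 = y2" by simp
  qed
  have img: "?h ` ?S = {x\<in>grid ?N K. P x}"
  proof
    show "?h ` ?S \<subseteq> {x\<in>grid ?N K. P x}"
      by (auto simp: grid_def PiE_def extensional_def Pi_def le_Suc_eq)
  next
    show "{x\<in>grid ?N K. P x} \<subseteq> ?h ` ?S"
    proof
      fix x assume x: "x \<in> {x\<in>grid ?N K. P x}"
      have "x(?N := undefined) \<in> grid m K" using x by (auto simp: grid_def PiE_def extensional_def)
      moreover have "x ?N \<in> K ?N" using x by (auto simp: grid_def PiE_def)
      moreover have "x = (x(?N := undefined))(?N := x ?N)" by simp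
      ultimately show "x \<in> ?h ` ?S" using x
        by (auto intro!: image_eqI[where x="(x(?N := undefined), x ?N)"])
    qed
  qed
  have "card {x\<in>grid ?N K. P x} = card ?S" using card_image[OF inj] img by simp
  also have "\<dots> = (\<Sum>x'\<in>grid m K. card {y\<in>K (Suc m). P (x'(Suc m := y))})"
    by (rule card_SigmaI) auto
  finally show ?thesis .
qed

lemma footprint:
  fixes K :: "nat \<Rightarrow> 'a::{finite,field} set" and c :: "(nat \<Rightarrow> nat) \<Rightarrow> 'a"
  assumes "finite E" "\<forall>e\<in>E. \<forall>i\<in>{1..n}. e i < card (K i)"
    "\<forall>e1\<in>E. \<forall>e2\<in>E. (\<forall>i\<in>{1..n}. e1 i = e2 i) \<longrightarrow> e1 = e2"
    "\<exists>e\<in>E. c e \<noteq> 0"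
  shows "\<exists>a\<in>E. c a \<noteq> 0 \<and> (\<Prod>i=1..n. card (K i) - a i) \<le> card {x\<in>grid n K. evalp n E c x \<noteq> 0}"
  using assms
proof (induction n arbitrary: E)
  case 0
  obtain e where e: "e \<in> E" "c e \<noteq> 0" using 0 by blast
  have E: "E = {e}" using 0(3) e by auto
  have g: "grid 0 K = {\<lambda>_. undefined}" by (simp add: grid_def)
  show ?case using e E g by (auto simp: evalp_def)
next
  case (Suc m)
  let ?N = "Suc m"
  let ?T = "{e ?N | e. e \<in> E \<and> c e \<noteq> 0}"
  define t where "t = Max ?T"
  have finT: "finite ?T" using Suc.prems(1) by simp
  have neT: "?T \<noteq> {}" using Suc.prems(4) by blast
  have tT: "t \<in> ?T" unfolding t_def using finT neT by (rule Max_in)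
  have tmax: "\<And>e. e \<in> E \<Longrightarrow> c e \<noteq> 0 \<Longrightarrow> e ?N \<le> t" unfolding t_def using finT by (intro Max_ge) auto
  define Et where "Et = {e\<in>E. e ?N = t}"
  have IH: "\<exists>a\<in>Et. c a \<noteq> 0 \<and> (\<Prod>i=1..m. card (K i) - a i) \<le> card {x\<in>grid m K. evalp m Et c x \<noteq> 0}"
  proof (rule Suc.IH)
    show "finite Et" using Suc.prems(1) unfolding Et_def by simp
    show "\<forall>e\<in>Et. \<forall>i\<in>{1..m}. e i < card (K i)" using Suc.prems(2) unfolding Et_def by auto
    show "\<forall>e1\<in>Et. \<forall>e2\<in>Et. (\<forall>i\<in>{1..m}. e1 i = e2 i) \<longrightarrow> e1 = e2"
    proof (intro ballI impI)
      fix e1 e2 assume e: "e1 \<in> Et" "e2 \<in> Et" "\<forall>i\<in>{1..m}. e1 i = e2 i"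
      have "\<forall>i\<in>{1..?N}. e1 i = e2 i" using e unfolding Et_def by (auto simp: le_Suc_eq)
      then show "e1 = e2" using Suc.prems(3) e(1,2) unfolding Et_def by blast
    qed
    show "\<exists>e\<in>Et. c e \<noteq> 0" using tT unfolding Et_def by auto
  qed
  then obtain a where a: "a \<in> Et" "c a \<noteq> 0"
    and aw: "(\<Prod>i=1..m. card (K i) - a i) \<le> card {x\<in>grid m K. evalp m Et c x \<noteq> 0}" by blast
  have aE: "a \<in> E" and at: "a ?N = t" using a unfolding Et_def by auto
  define p where "p = (\<lambda>x'. \<Sum>e\<in>E. monom (c e * (\<Prod>i=1..m. x' i ^ e i)) (e ?N))"
  have ev: "evalp ?N E c (x'(?N := y)) = poly (p x') y" for x' y
  proof -
    have "\<And>e. (\<Prod>i=1..?N. (x'(?N := y)) i ^ e i) = (\<Prod>i=1..m. x' i ^ e i) * y ^ e ?N"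
    proof -
      fix e
      have "(\<Prod>i=1..?N. (x'(?N := y)) i ^ e i) = (x'(?N := y)) ?N ^ e ?N * (\<Prod>i=1..m. (x'(?N := y)) i ^ e i)"
        by (simp add: atLeastAtMostSuc_conv)
      also have "(\<Prod>i=1..m. (x'(?N := y)) i ^ e i) = (\<Prod>i=1..m. x' i ^ e i)"
        by (rule prod.cong) auto
      finally show "(\<Prod>i=1..?N. (x'(?N := y)) i ^ e i) = (\<Prod>i=1..m. x' i ^ e i) * y ^ e ?N" by simp
    qed
    then show ?thesis unfolding evalp_def p_def by (simp add: poly_sum poly_monom mult.assoc)
  qed
  have coeff_p: "coeff (p x') j = (\<Sum>e\<in>{e\<in>E. e ?N = j}. c e * (\<Prod>i=1..m. x' i ^ e i))" for x' j
    unfolding p_def using Suc.prems(1) by (simp add: coeff_sum coeff_monom sum.inter_filter)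
  have coeff_t: "coeff (p x') t = evalp m Et c x'" for x'
    unfolding coeff_p evalp_def Et_def by simp
  have coeff_big: "coeff (p x') j = 0" if "t < j" for x' j
  proof -
    have "\<And>e. e \<in> {e\<in>E. e ?N = j} \<Longrightarrow> c e = 0" using tmax that by force
    then show ?thesis unfolding coeff_p by simp
  qed
  have degp: "degree (p x') \<le> t" for x' using coeff_big by (intro degree_le) auto
  have fiber: "card (K ?N) - t \<le> card {y\<in>K ?N. poly (p x') y \<noteq> 0}" if "evalp m Et c x' \<noteq> 0" for x'
  proof -
    have pn: "p x' \<noteq> 0" using that coeff_t[of x'] by auto
    have r: "card {y. poly (p x') y = 0} \<le> t" using card_poly_roots_bound[OF pn] degp[of x'] by linarith
    have "card (K ?N) - card {y. poly (p x') y = 0} \<le> card (K ?N - {y. poly (p x') y = 0})"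
      by (rule diff_card_le_card_Diff) simp
    also have "K ?N - {y. poly (p x') y = 0} = {y\<in>K ?N. poly (p x') y \<noteq> 0}" by auto
    finally show ?thesis using r by linarith
  qed
  have "card {x\<in>grid m K. evalp m Et c x \<noteq> 0} * (card (K ?N) - t)
      = (\<Sum>x'\<in>{x\<in>grid m K. evalp m Et c x \<noteq> 0}. card (K ?N) - t)" by simp
  also have "\<dots> \<le> (\<Sum>x'\<in>{x\<in>grid m K. evalp m Et c x \<noteq> 0}. card {y\<in>K ?N. poly (p x') y \<noteq> 0})"
    by (rule sum_mono) (use fiber in auto)
  also have "\<dots> \<le> (\<Sum>x'\<in>grid m K. card {y\<in>K ?N. poly (p x') y \<noteq> 0})"
    by (rule sum_mono2) auto
  also have "\<dots> = card {x\<in>grid ?N K. evalp ?N E c x \<noteq> 0}"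
    using grid_Suc_card[of m K "\<lambda>x. evalp ?N E c x \<noteq> 0"] ev by simp
  finally have w: "card {x\<in>grid m K. evalp m Et c x \<noteq> 0} * (card (K ?N) - t) \<le> card {x\<in>grid ?N K. evalp ?N E c x \<noteq> 0}" .
  have "(\<Prod>i=1..?N. card (K i) - a i) = (\<Prod>i=1..m. card (K i) - a i) * (card (K ?N) - t)"
    using at by (simp add: atLeastAtMostSuc_conv mult.commute)
  also have "\<dots> \<le> card {x\<in>grid m K. evalp m Et c x \<noteq> 0} * (card (K ?N) - t)"
    using aw by simp
  finally show ?case using w aE a(2) by (meson order_trans)
qed



fun G :: "nat list \<Rightarrow> nat \<Rightarrow> nat" where
  "G [] A = 1"
| "G (x#xs) A = (if x - 1 \<le> A then G xs (A - (x - 1)) else (x - A) * prod_list xs)"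

lemma G_pos: "\<forall>x\<in>set ds. 1 \<le> x \<Longrightarrow> 1 \<le> G ds A"
proof (induction ds arbitrary: A)
  case Nil then show ?case by simp
next
  case (Cons x xs)
  have "1 \<le> prod_list xs" using Cons.prems
    by (induction xs) auto
  then show ?case using Cons by auto
qed

lemma G_H:
  assumes "sorted ds" "\<forall>x\<in>set ds. u + 1 \<le> x"
  shows "G ds Y \<le> (u+1) * G ds (Y+u)"
  using assms
proof (induction ds arbitrary: Y)
  case Nil then show ?case by simp
next
  case (Cons e es)
  have es: "sorted es" "\<forall>x\<in>set es. u + 1 \<le> x" using Cons.prems by auto
  have ege: "\<forall>x\<in>set es. e \<le> x" using Cons.prems by auto
  have e1: "u + 1 \<le> e" using Cons.prems by auto
  show ?case
  proof (cases "e - 1 \<le> Y")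
    case True
    then have "G (e#es) Y = G es (Y - (e-1))" by simp
    also have "\<dots> \<le> (u+1) * G es (Y - (e - 1) + u)" using Cons.IH es by blast
    also have "Y - (e - 1) + u = Y + u - (e - 1)" using True by simp
    also have "(u+1) * G es (Y + u - (e - 1)) = (u+1) * G (e#es) (Y+u)" using True by simp
    finally show ?thesis .
  next
    case False
    note F = False
    show ?thesis
    proof (cases "e - 1 \<le> Y + u")
      case True
      define Z where "Z = Y + u - (e - 1)"
      have Zu: "Z + 1 \<le> u" using F True e1 unfolding Z_def by linarith
      have eY: "e - Y = u + 1 - Z" using F True e1 unfolding Z_def by linarith
      have "(u + 1 - Z) * prod_list es \<le> (u+1) * G es Z"
      proof (cases es)
        case Nil then show ?thesis by simp
      next
        case (Cons f fs)
        have f: "u + 1 \<le> f" using es Cons by auto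
        have fs: "sorted fs" "\<forall>x\<in>set fs. u + 1 \<le> x" using es Cons by auto
        have nl: "\<not> f - 1 \<le> Z" using Zu f by linarith
        have "G es Z = (f - Z) * prod_list fs" using Cons nl by simp
        moreover have "(u + 1 - Z) * f \<le> (u+1) * (f - Z)"
        proof -
          have e1: "(u+1-Z)*f = (u+1)*f - Z*f" by (simp add: diff_mult_distrib)
          have e2: "(u+1)*(f-Z) = (u+1)*f - (u+1)*Z" by (simp add: diff_mult_distrib2)
          have "(u+1)*Z \<le> f*Z" using f by (rule mult_le_mono1)
          then have "(u+1)*Z \<le> Z*f" by (simp add: mult.commute)
          then show ?thesis unfolding e1 e2 by linarith
        qed
        ultimately have "(u + 1 - Z) * f * prod_list fs \<le> (u+1) * G es Z"
          by (metis mult_le_mono1 mult.assoc)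
        then show ?thesis using Cons by (simp add: mult.assoc)
      qed
      moreover have "G (e#es) Y = (e - Y) * prod_list es" using F by simp
      moreover have "G (e#es) (Y+u) = G es Z" using True unfolding Z_def by simp
      ultimately show ?thesis using eY by simp
    next
      case False
      have w: "u + 2 \<le> e - Y" using False by linarith
      have "e - Y \<le> (u+1) * (e - (Y + u))"
      proof -
        define w' where "w' = e - Y"
        have ee: "e - (Y + u) = w' - u" unfolding w'_def by simp
        have e2: "(u+1)*(w'-u) = (u+1)*w' - (u+1)*u" by (simp add: diff_mult_distrib2)
        have e3: "(u+1)*w' = w' + u*w'" by simp
        have "u*(u+1) \<le> u*w'" using w unfolding w'_def by (intro mult_le_mono2) linarith
        then have "(u+1)*u \<le> u*w'" by (simp add: mult.commute)
        then show ?thesis unfolding ee e2 e3 w'_def[symmetric] by linarith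
      qed
      then have "(e - Y) * prod_list es \<le> (u+1) * (e - (Y + u)) * prod_list es" by (rule mult_le_mono1)
      moreover have "G (e#es) Y = (e - Y) * prod_list es" using F by simp
      moreover have "G (e#es) (Y+u) = (e - (Y + u)) * prod_list es" using False by simp
      ultimately show ?thesis by (simp only: mult.assoc)
    qed
  qed
qed

lemma G_main:
  assumes "sorted (map D is)" "\<forall>i\<in>set is. 1 \<le> b i \<and> b i \<le> D i"
    "(\<Sum>i\<leftarrow>is. D i - b i) \<le> A"
  shows "G (map D is) A \<le> (\<Prod>i\<leftarrow>is. b i)"
  using assms
proof (induction "is" arbitrary: A)
  case Nil then show ?case by simp
next
  case (Cons j js)
  let ?a = "D j - b j"
  have js: "sorted (map D js)" "\<forall>i\<in>set js. 1 \<le> b i \<and> b i \<le> D i"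
       "(\<Sum>i\<leftarrow>js. D i - b i) \<le> A - ?a" using Cons.prems by auto
  have IH: "G (map D js) (A - ?a) \<le> (\<Prod>i\<leftarrow>js. b i)" using Cons.IH js by blast
  have bj: "1 \<le> b j" "b j \<le> D j" using Cons.prems by auto
  have aA: "?a \<le> A" using Cons.prems by auto
  have ge: "\<forall>x\<in>set (map D js). D j \<le> x" using Cons.prems by auto
  have "G (map D (j#js)) A \<le> b j * G (map D js) (A - ?a)"
  proof (cases "D j - 1 \<le> A")
    case True
    define u where "u = b j - 1"
    have "G (map D js) (A - (D j - 1)) \<le> (u+1) * G (map D js) (A - (D j - 1) + u)"
      apply (rule G_H) using js ge bj unfolding u_def by auto
    moreover have "A - (D j - 1) + u = A - ?a" unfolding u_def using True bj by linarith
    moreover have "u + 1 = b j" unfolding u_def using bj by simp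
    ultimately have "G (map D js) (A - (D j - 1)) \<le> b j * G (map D js) (A - ?a)" by metis
    then show ?thesis using True by simp
  next
    case False
    have lhs: "G (map D (j#js)) A = (D j - A) * prod_list (map D js)" using False by simp
    show ?thesis
    proof (cases js)
      case Nil
      then show ?thesis using lhs bj aA by simp
    next
      case (Cons j2 js2)
      have d2: "D j \<le> D j2" using ge Cons by simp
      have lt: "\<not> D j2 - 1 \<le> A - ?a" using False d2 by linarith
      have g2: "G (map D js) (A - ?a) = (D j2 - (A - ?a)) * prod_list (map D js2)"
        using Cons lt by simp
      have key: "(D j - A) * D j2 \<le> b j * (D j2 - (A - ?a))"
      proof -
        have "int ((D j - A) * D j2) = (int (D j) - int A) * int (D j2)" using False by (simp add: of_nat_diff)
        moreover have "int (b j * (D j2 - (A - ?a))) = int (b j) * (int (D j2) - (int A - (int (D j) - int (b j))))"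
          using lt aA bj by (simp add: of_nat_diff)
        moreover have "(int (D j) - int A) * int (D j2) \<le> int (b j) * (int (D j2) - (int A - (int (D j) - int (b j))))"
        proof -
          define x where "x = int (D j) - int (b j)"
          have x0: "0 \<le> x" "x \<le> int A" using bj aA unfolding x_def by auto
          have "0 \<le> (int A - x) * (int (D j2) - int (D j)) + x * (int A - x)"
            using x0 d2 by simp
          then show ?thesis unfolding x_def by (simp add: algebra_simps)
        qed
        ultimately show ?thesis by linarith
      qed
      show ?thesis using lhs g2 Cons key
        by simp
    qed
  qed
  also have "\<dots> \<le> b j * (\<Prod>i\<leftarrow>js. b i)" using IH by simp
  finally show ?case by simp
qed

lemma G_cons_lt: "\<not> x - 1 \<le> A \<Longrightarrow> G (x#xs) A = (x - A) * prod_list xs"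
  by simp

lemma G_app: "G (xs @ ys) (sum_list (map (\<lambda>x. x - 1) xs) + A) = G ys A"
  by (induction xs) (auto simp: add.assoc)



lemma listsplit: "s \<in> {1..N} \<Longrightarrow> [1..<N+1] = [1..<s] @ s # [Suc s..<N+1]"
proof -
  assume s: "s \<in> {1..N}"
  have "[1..<N+1] = [1..<s] @ [s..<N+1]" using s upt_add_eq_append[of 1 s "N+1-s"] by simp
  moreover have "[s..<N+1] = s # [Suc s..<N+1]" using s by (intro upt_conv_Cons) simp
  ultimately show ?thesis by simp
qed

lemma sum_upt_set0: "(\<Sum>i\<leftarrow>[a..<b]. f i) = (\<Sum>i\<in>{a..<b}. (f i :: nat))"
  using sum.distinct_set_conv_list[of "[a..<b]" f] by simp

lemma prod_upt_set0: "(\<Prod>i\<leftarrow>[a..<b]. f i) = (\<Prod>i\<in>{a..<b}. (f i :: nat))"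
  using prod.distinct_set_conv_list[of "[a..<b]" f] by simp

lemma sum_upt_set: "(\<Sum>i\<leftarrow>[a..<b+1]. f i) = (\<Sum>i=a..b. (f i :: nat))"
  using sum_upt_set0[of f a "b+1"] by (simp add: atLeastLessThanSuc_atLeastAtMost)

lemma prod_upt_set: "(\<Prod>i\<leftarrow>[a..<b+1]. f i) = (\<Prod>i=a..b. (f i :: nat))"
  using prod_upt_set0[of f a "b+1"] by (simp add: atLeastLessThanSuc_atLeastAtMost)

lemma upt_split: "a \<le> b \<Longrightarrow> b \<le> c \<Longrightarrow> [a..<c] = [a..<b] @ [b..<c]"
  using upt_add_eq_append[of a b "c - b"] by simp

lemma sorted_map_mono:
  assumes "sorted xs" "\<forall>x\<in>set xs. x \<in> {1..n}" "\<forall>i j. 1 \<le> i \<longrightarrow> i \<le> j \<longrightarrow> j \<le> n \<longrightarrow> D i \<le> (D j::nat)"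
  shows "sorted (map D xs)"
  unfolding sorted_wrt_map
  using assms(1) unfolding sorted_wrt_map
  by (rule sorted_wrt_mono_rel[rotated]) (use assms in auto)

lemma numeric:
  fixes D b :: "nat \<Rightarrow> nat"
  assumes mono: "\<forall>i j. 1 \<le> i \<longrightarrow> i \<le> j \<longrightarrow> j \<le> n \<longrightarrow> D i \<le> D j"
    and bb: "\<forall>i\<in>{1..n}. 1 \<le> b i \<and> b i \<le> D i"
    and bud: "(\<Sum>i=1..n. D i - b i) \<le> d" and dd: "d = (\<Sum>i=1..k. D i - 1) + l"
    and kn: "k < n" and l0: "0 < l" and lD: "l \<le> D (k+1) - 1"
    and s: "s \<in> {1..n}" and bs: "\<delta> \<le> b s" and d2: "2 \<le> \<delta>"
    and ni: "\<not>(k+2 \<le> n \<and> D(k+2) \<le> D s)"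
    and nii: "\<not>(D s \<le> D(k+1) \<and> 0 \<le> int(D s) - (int(D(k+1)) - int l) \<and>
               int (D s) - (int (D (k+1)) - int l) < int (D s) - int \<delta> + 1)"
  shows "(D(k+1) - l) * (\<Prod>i=k+2..n. D i) < (\<Prod>i=1..n. b i)"
proof -
  define m where "m = D(k+1) - l"
  have sk: "s \<le> k+1"
  proof (rule ccontr)
    assume "\<not> s \<le> k+1"
    then have "k+2 \<le> n" "D(k+2) \<le> D s" using s mono by auto
    then show False using ni by blast
  qed
  have Hgt: "\<forall>j. k+2 \<le> j \<longrightarrow> j \<le> n \<longrightarrow> D s < D j"
  proof (intro allI impI)
    fix j assume j: "k+2 \<le> j" "j \<le> n"
    have "D s < D (k+2)" using ni j by auto
    also have "D (k+2) \<le> D j" using mono j by auto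
    finally show "D s < D j" .
  qed
  have Dpos: "\<forall>i\<in>{1..n}. 1 \<le> D i" using bb by force
  have dsk: "D s \<le> D (k+1)" using mono s sk kn by auto
  have m1: "1 \<le> m" "m + 1 \<le> D (k+1)" using lD l0 unfolding m_def by auto
  have cases: "m < \<delta> \<or> D s < m" using nii dsk unfolding m_def using lD by auto
  have bsD: "b s \<le> D s" "1 \<le> b s" using bb s by auto
  define "is" where "is = [1..<s] @ [Suc s..<n+1]"
  have full: "[1..<n+1] = [1..<s] @ s # [Suc s..<n+1]" using s by (rule listsplit)
  have prodsplit: "(\<Prod>i=1..n. b i) = b s * (\<Prod>i\<leftarrow>is. b i)"
  proof -
    have "(\<Prod>i=1..n. b i) = (\<Prod>i\<leftarrow>[1..<n+1]. b i)"
      by (rule prod_upt_set[symmetric])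
    also have "\<dots> = b s * (\<Prod>i\<leftarrow>is. b i)" unfolding full is_def by simp
    finally show ?thesis .
  qed
  have sumsplit: "(\<Sum>i=1..n. D i - b i) = (D s - b s) + (\<Sum>i\<leftarrow>is. D i - b i)"
  proof -
    have "(\<Sum>i=1..n. D i - b i) = (\<Sum>i\<leftarrow>[1..<n+1]. D i - b i)"
      by (rule sum_upt_set[symmetric])
    also have "\<dots> = (D s - b s) + (\<Sum>i\<leftarrow>is. D i - b i)" unfolding full is_def by simp
    finally show ?thesis .
  qed
  define A where "A = d - (D s - b s)"
  have budA: "(\<Sum>i\<leftarrow>is. D i - b i) \<le> A" using bud sumsplit unfolding A_def by linarith
  have setis: "\<forall>x\<in>set is. x \<in> {1..n}" unfolding is_def using s by auto
  have sortis: "sorted (map D is)"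
    by (rule sorted_map_mono[OF _ setis mono]) (simp add: is_def sorted_append)
  have Gle: "G (map D is) A \<le> (\<Prod>i\<leftarrow>is. b i)"
    by (rule G_main[OF sortis _ budA]) (use bb setis in auto)
  have S1: "(\<Sum>i=1..k+1. D i - 1) = (\<Sum>i=1..k. D i - 1) + (D (k+1) - 1)" by simp
  define P where "P = (\<Prod>i=k+2..n. D i)"
  have Ppos: "1 \<le> P" unfolding P_def using Dpos
    by (intro prod_ge_1) auto
  show ?thesis
  proof (cases "m < \<delta>")
    case True
    have bm: "m < b s" using True bs by linarith
    define Lp where "Lp = [1..<s] @ [Suc s..<k+2]"
    define H where "H = [k+2..<n+1]"
    have isLH: "is = Lp @ H" unfolding is_def Lp_def H_def using sk kn
      upt_split[of "Suc s" "k+2" "n+1"] by simp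
    have sLp: "(\<Sum>i\<leftarrow>Lp. D i - 1) + (D s - 1) = (\<Sum>i=1..k+1. D i - 1)"
    proof -
      have "[1..<k+1+1] = [1..<s] @ s # [Suc s..<k+1+1]" using s sk by (intro listsplit) auto
      then have "[1..<k+2] = [1..<s] @ s # [Suc s..<k+2]" by simp
      then have "(\<Sum>i\<leftarrow>[1..<k+2]. D i - 1) = (\<Sum>i\<leftarrow>Lp. D i - 1) + (D s - 1)"
        unfolding Lp_def by simp
      moreover have "(\<Sum>i\<leftarrow>[1..<k+2]. D i - 1) = (\<Sum>i=1..k+1. D i - 1)"
        using sum_upt_set[of "\<lambda>i. D i - 1" 1 "k+1"] by (simp add: numeral_2_eq_2)
      ultimately show ?thesis by simp
    qed
    have Aeq: "A = sum_list (map (\<lambda>x. x - 1) (map D Lp)) + (b s - m)"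
    proof -
      have "sum_list (map (\<lambda>x. x - 1) (map D Lp)) = (\<Sum>i\<leftarrow>Lp. D i - 1)" by (simp add: comp_def)
      then show ?thesis using sLp S1 dd bm bsD m1 unfolding A_def m_def by linarith
    qed
    have GH: "G (map D is) A = G (map D H) (b s - m)"
      unfolding isLH Aeq map_append by (rule G_app)
    show ?thesis
    proof (cases "k+2 \<le> n")
      case False
      then have "H = []" unfolding H_def by simp
      then have "G (map D is) A = 1" using GH by simp
      moreover have "P = 1" using False unfolding P_def by simp
      ultimately have "1 \<le> (\<Prod>i\<leftarrow>is. b i)" using Gle by simp
      then have "b s * 1 \<le> b s * (\<Prod>i\<leftarrow>is. b i)" by (rule mult_le_mono2)
      then have "m < (\<Prod>i=1..n. b i)" using bm prodsplit by linarith
      then have "m * P < (\<Prod>i=1..n. b i)" using \<open>P = 1\<close> by simp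
      then show ?thesis unfolding m_def P_def .
    next
      case True
      have H2: "H = (k+2) # [k+3..<n+1]"
      proof -
        have X: "[k+2..<n+1] = (k+2) # [Suc (k+2)..<n+1]" by (rule upt_conv_Cons) (use True in simp)
        have Y: "Suc (k+2) = k+3" by simp
        show ?thesis by (simp only: H_def X Y)
      qed
      define R where "R = (\<Prod>i\<leftarrow>[k+3..<n+1]. D i)"
      have D2: "D s < D (k+2)" using Hgt True by auto
      have lt: "\<not> D (k+2) - 1 \<le> b s - m" using D2 bsD m1 bm by linarith
      have GH2: "G (map D H) (b s - m) = (D (k+2) - (b s - m)) * R"
        unfolding H2 list.map R_def by (rule G_cons_lt[OF lt])
      have PR: "P = D (k+2) * R"
      proof -
        have "P = (\<Prod>i\<leftarrow>H. D i)" unfolding P_def H_def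
          by (rule prod_upt_set[symmetric])
        then show ?thesis unfolding H2 R_def by simp
      qed
      have "R \<noteq> 0" using Ppos PR by auto
      then have Rpos: "0 < R" by simp
      have key: "m * D (k+2) < b s * (D (k+2) - (b s - m))"
      proof -
        have "int (m * D (k+2)) < int (b s) * (int (D (k+2)) - (int (b s) - int m))"
        proof -
          have "0 < (int (b s) - int m) * (int (D (k+2)) - int (b s))" using bm D2 bsD by simp
          then show ?thesis by (simp add: algebra_simps)
        qed
        moreover have "int (b s * (D (k+2) - (b s - m))) = int (b s) * (int (D (k+2)) - (int (b s) - int m))"
        proof -
          have q1: "int (D (k+2) - (b s - m)) = int (D (k+2)) - int (b s - m)" by (rule of_nat_diff) (use lt in linarith)
          have q2: "int (b s - m) = int (b s) - int m" by (rule of_nat_diff) (use bm in linarith)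
          show ?thesis by (simp only: of_nat_mult q1 q2)
        qed
        ultimately show ?thesis by linarith
      qed
      have "m * P = m * D (k+2) * R" using PR by simp
      also have "\<dots> < b s * (D (k+2) - (b s - m)) * R" using key Rpos by (rule mult_less_mono1)
      also have "\<dots> = b s * G (map D is) A" using GH GH2 by simp
      also have "\<dots> \<le> b s * (\<Prod>i\<leftarrow>is. b i)" using Gle by simp
      finally show ?thesis using prodsplit unfolding m_def P_def by simp
    qed
  next
    case False
    then have Dm: "D s < m" using cases by simp
    have bm: "b s < m" using Dm bsD by simp
    have sk2: "s \<le> k" using Dm m1 dsk sk by (cases "s = k+1") auto
    define Lq where "Lq = [1..<s] @ [Suc s..<k+1]"
    define H where "H = [k+2..<n+1]"
    have isLH: "is = Lq @ (k+1) # H"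
    proof -
      have "[Suc s..<n+1] = [Suc s..<k+1] @ [k+1..<n+1]" using sk2 kn by (intro upt_split) auto
      moreover have "[k+1..<n+1] = (k+1) # [k+2..<n+1]" using kn upt_conv_Cons[of "k+1" "n+1"] by simp
      ultimately show ?thesis unfolding is_def Lq_def H_def by simp
    qed
    have sLq: "(\<Sum>i\<leftarrow>Lq. D i - 1) + (D s - 1) = (\<Sum>i=1..k. D i - 1)"
    proof -
      have "[1..<k+1] = [1..<s] @ s # [Suc s..<k+1]" using s sk2 by (intro listsplit) auto
      then have "(\<Sum>i\<leftarrow>[1..<k+1]. D i - 1) = (\<Sum>i\<leftarrow>Lq. D i - 1) + (D s - 1)"
        unfolding Lq_def by simp
      moreover have "(\<Sum>i\<leftarrow>[1..<k+1]. D i - 1) = (\<Sum>i=1..k. D i - 1)"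
        by (rule sum_upt_set)
      ultimately show ?thesis by simp
    qed
    have Aeq: "A = sum_list (map (\<lambda>x. x - 1) (map D Lq)) + (D (k+1) - 1 - (m - b s))"
    proof -
      have "sum_list (map (\<lambda>x. x - 1) (map D Lq)) = (\<Sum>i\<leftarrow>Lq. D i - 1)" by (simp add: comp_def)
      then show ?thesis using sLq dd bm bsD m1 unfolding A_def m_def by linarith
    qed
    have lt: "\<not> D (k+1) - 1 \<le> D (k+1) - 1 - (m - b s)" using bm m1 by linarith
    have GH: "G (map D is) A = (m - b s + 1) * (\<Prod>i\<leftarrow>H. D i)"
    proof -
      have "G (map D is) A = G (D (k+1) # map D H) (D (k+1) - 1 - (m - b s))"
        unfolding isLH Aeq map_append by (simp only: G_app list.map)
      also have "\<dots> = (D (k+1) - (D (k+1) - 1 - (m - b s))) * (\<Prod>i\<leftarrow>H. D i)"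
        by (rule G_cons_lt[OF lt])
      also have "D (k+1) - (D (k+1) - 1 - (m - b s)) = m - b s + 1" using bm m1 by linarith
      finally show ?thesis .
    qed
    have PH: "P = (\<Prod>i\<leftarrow>H. D i)" unfolding P_def H_def
      by (rule prod_upt_set[symmetric])
    have key: "m < b s * (m - b s + 1)"
    proof -
      have "int m < int (b s) * (int m - int (b s) + 1)"
      proof -
        have "0 < (int (b s) - 1) * (int m - int (b s))" using bm bs d2 by simp
        then show ?thesis by (simp add: algebra_simps)
      qed
      moreover have "int (b s * (m - b s + 1)) = int (b s) * (int m - int (b s) + 1)"
      proof -
        have q2: "int (m - b s) = int m - int (b s)" by (rule of_nat_diff) (use bm in linarith)
        show ?thesis by (simp only: of_nat_mult of_nat_add q2 of_nat_1)
      qed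
      ultimately show ?thesis by linarith
    qed
    have "m * P < b s * (m - b s + 1) * P" using key Ppos by simp
    also have "\<dots> = b s * G (map D is) A" by (simp only: GH PH mult.assoc)
    also have "\<dots> \<le> b s * (\<Prod>i\<leftarrow>is. b i)" using Gle by simp
    finally show ?thesis using prodsplit unfolding m_def P_def by simp
  qed
qed



lemma finite_monomials_le: "finite (monomials_le n d)"
proof -
  let ?phi = "\<lambda>g i. if i \<in> {1..n} then g i else (0::nat)"
  have "monomials_le n d \<subseteq> ?phi ` (PiE {1..n} (\<lambda>_. {..d}))"
  proof
    fix e assume e: "e \<in> monomials_le n d"
    have le: "e i \<le> d" if "i \<in> {1..n}" for i
    proof -
      have "e i \<le> (\<Sum>i=1..n. e i)" using that by (intro member_le_sum) auto
      then show ?thesis using e unfolding monomials_le_def by simp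
    qed
    have "e = ?phi (restrict e {1..n})" using e unfolding monomials_le_def by (auto simp: fun_eq_iff)
    moreover have "restrict e {1..n} \<in> PiE {1..n} (\<lambda>_. {..d})" using le by auto
    ultimately show "e \<in> ?phi ` (PiE {1..n} (\<lambda>_. {..d}))" by blast
  qed
  moreover have "finite (?phi ` (PiE {1..n} (\<lambda>_. {..d})))" by (intro finite_imageI finite_PiE) auto
  ultimately show ?thesis by (rule finite_subset)
qed

lemma product_code:
  fixes h :: "nat \<Rightarrow> 'a::field poly"
  assumes deg: "(\<Sum>i=1..n. degree (h i)) \<le> d"
  shows "evalp n (monomials_le n d) (\<lambda>e. \<Prod>i=1..n. coeff (h i) (e i)) x = (\<Prod>i=1..n. poly (h i) (x i))"
proof -
  let ?phi = "\<lambda>g i. if i \<in> {1..n} then g i else (0::nat)"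
  let ?P = "PiE {1..n} (\<lambda>i. {..degree (h i)})"
  let ?c = "\<lambda>e. \<Prod>i=1..n. coeff (h i) (e i)"
  let ?t = "\<lambda>e. \<Prod>i=1..n. coeff (h i) (e i) * x i ^ e i"
  have "(\<Prod>i=1..n. poly (h i) (x i)) = (\<Prod>i=1..n. \<Sum>j\<le>degree (h i). coeff (h i) j * x i ^ j)"
    by (simp add: poly_altdef)
  also have "\<dots> = (\<Sum>g\<in>?P. \<Prod>i=1..n. coeff (h i) (g i) * x i ^ g i)"
    by (rule prod_sum_PiE) auto
  also have "\<dots> = (\<Sum>e\<in>?phi ` ?P. ?t e)"
  proof -
    have inj: "inj_on ?phi ?P"
    proof (rule inj_onI)
      fix g1 g2 assume g: "g1 \<in> ?P" "g2 \<in> ?P" "?phi g1 = ?phi g2"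
      show "g1 = g2"
      proof
        fix i show "g1 i = g2 i"
        proof (cases "i \<in> {1..n}")
          case True then show ?thesis using fun_cong[OF g(3), of i] by simp
        next
          case False then show ?thesis using g(1,2) by (simp add: PiE_def extensional_def)
        qed
      qed
    qed
    have "(\<Sum>e\<in>?phi ` ?P. ?t e) = (\<Sum>g\<in>?P. ?t (?phi g))" using sum.reindex[OF inj, of ?t] by (simp only: comp_def)
    also have "\<dots> = (\<Sum>g\<in>?P. \<Prod>i=1..n. coeff (h i) (g i) * x i ^ g i)"
      by (intro sum.cong refl prod.cong) auto
    finally show ?thesis by simp
  qed
  also have "\<dots> = (\<Sum>e\<in>?phi ` ?P. ?c e * (\<Prod>i=1..n. x i ^ e i))"
    by (simp add: prod.distrib)
  also have "\<dots> = evalp n (monomials_le n d) ?c x"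
    unfolding evalp_def
  proof (rule sum.mono_neutral_right[symmetric])
    show "finite (monomials_le n d)" by (rule finite_monomials_le)
    show "?phi ` ?P \<subseteq> monomials_le n d"
    proof
      fix e assume "e \<in> ?phi ` ?P"
      then obtain g where g: "g \<in> ?P" "e = ?phi g" by blast
      have "(\<Sum>i=1..n. e i) \<le> (\<Sum>i=1..n. degree (h i))"
        using g by (intro sum_mono) (auto simp: PiE_def Pi_def)
      then show "e \<in> monomials_le n d" using deg g(2) unfolding monomials_le_def by auto
    qed
    show "\<forall>e\<in>monomials_le n d - ?phi ` ?P. ?c e * (\<Prod>i=1..n. x i ^ e i) = 0"
    proof
      fix e assume e: "e \<in> monomials_le n d - ?phi ` ?P"
      have "\<exists>i\<in>{1..n}. degree (h i) < e i"
      proof (rule ccontr)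
        assume "\<not> ?thesis"
        then have "restrict e {1..n} \<in> ?P" by auto
        moreover have "e = ?phi (restrict e {1..n})" using e unfolding monomials_le_def by (auto simp: fun_eq_iff)
        ultimately show False using e by blast
      qed
      then obtain i where i: "i \<in> {1..n}" "degree (h i) < e i" by blast
      have "coeff (h i) (e i) = 0" using i(2) by (rule coeff_eq_0)
      then have "?c e = 0" using i(1) by (intro prod_zero) auto
      then show "?c e * (\<Prod>i=1..n. x i ^ e i) = 0" by simp
    qed
  qed
  finally show ?thesis by simp
qed



lemma ivl_split3: "k < (n::nat) \<Longrightarrow> {1..n} = {1..k} \<union> ({k+1} \<union> {k+2..n})"
  by auto

lemma sum_split3:
  fixes f :: "nat \<Rightarrow> 'b::comm_monoid_add"
  assumes "k < n" shows "(\<Sum>i=1..n. f i) = (\<Sum>i=1..k. f i) + (f (k+1) + (\<Sum>i=k+2..n. f i))"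
  unfolding ivl_split3[OF assms] by (subst sum.union_disjoint, auto)+

lemma prod_split3:
  fixes f :: "nat \<Rightarrow> 'b::comm_monoid_mult"
  assumes "k < n" shows "(\<Prod>i=1..n. f i) = (\<Prod>i=1..k. f i) * (f (k+1) * (\<Prod>i=k+2..n. f i))"
  unfolding ivl_split3[OF assms] by (subst prod.union_disjoint, auto)+

lemma witness:
  fixes K :: "nat \<Rightarrow> 'a::{finite,field} set"
  assumes sub: "\<forall>i\<in>{1..n}. is_subfield (K i)" and kn: "k < n"
    and lD: "l \<le> card (K (k+1)) - 1" and dd: "d = (\<Sum>i=1..k. card (K i) - 1) + l"
  shows "\<exists>v\<in>affine_cartesian_code n K d. (\<exists>x\<in>grid n K. v x \<noteq> 0) \<and>
           hamming_wt (grid n K) v = (card (K (k+1)) - l) * (\<Prod>i=k+2..n. card (K i))"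
proof -
  have lc: "l \<le> card (K (k+1))" using lD by simp
  obtain Bk where Bk: "Bk \<subseteq> K (k+1)" "card Bk = l" "finite Bk"
    using obtain_subset_with_card_n[OF lc] by blast
  define B where "B i = (if i \<le> k then K i - {0} else if i = k+1 then Bk else {})" for i
  define h where "h i = (\<Prod>b\<in>B i. [:-b, 1:])" for i
  have zK: "0 \<in> K i" if "i \<in> {1..n}" for i using sub that unfolding is_subfield_def by auto
  have degh: "degree (h i) = card (B i)" for i
  proof -
    have "degree (h i) = (\<Sum>b\<in>B i. degree [:-b, 1::'a:])"
      unfolding h_def by (rule degree_prod_eq_sum_degree) auto
    then show ?thesis by simp
  qed
  have cardB: "card (B i) = (if i \<le> k then card (K i) - 1 else if i = k+1 then l else 0)" if "i \<in> {1..n}" for i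
    using zK[OF that] Bk by (auto simp: B_def card_Diff_singleton)
  have degsum: "(\<Sum>i=1..n. degree (h i)) \<le> d"
  proof -
    have "(\<Sum>i=1..n. degree (h i)) = (\<Sum>i=1..k. degree (h i)) + (degree (h (k+1)) + (\<Sum>i=k+2..n. degree (h i)))"
      by (rule sum_split3[OF kn])
    also have "(\<Sum>i=1..k. degree (h i)) = (\<Sum>i=1..k. card (K i) - 1)"
      using kn by (intro sum.cong refl) (auto simp: degh cardB)
    also have "degree (h (k+1)) = l" using kn by (simp add: degh cardB)
    also have "(\<Sum>i=k+2..n. degree (h i)) = 0" by (auto simp: degh B_def)
    finally show ?thesis using dd by simp
  qed
  define c where "c e = (\<Prod>i=1..n. coeff (h i) (e i))" for e
  define v where "v = (\<lambda>x\<in>grid n K. evalp n (monomials_le n d) c x)"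
  have vC: "v \<in> affine_cartesian_code n K d"
    unfolding v_def affine_cartesian_code_def eval_code_def by blast
  have vx: "v x = (\<Prod>i=1..n. \<Prod>b\<in>B i. (x i - b))" if "x \<in> grid n K" for x
  proof -
    have "v x = (\<Prod>i=1..n. poly (h i) (x i))" using that unfolding v_def c_def
      using product_code[OF degsum, of x] by simp
    then show ?thesis unfolding h_def by (simp add: poly_prod)
  qed
  have supp: "{x\<in>grid n K. v x \<noteq> 0} = PiE {1..n} (\<lambda>i. K i - B i)"
  proof -
    have "{x\<in>grid n K. v x \<noteq> 0} = {x\<in>grid n K. \<forall>i\<in>{1..n}. \<forall>b\<in>B i. x i \<noteq> b}"
      using vx by auto
    also have "\<dots> = PiE {1..n} (\<lambda>i. K i - B i)"
      unfolding grid_def by (auto simp: PiE_def Pi_def)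
    finally show ?thesis .
  qed
  have wt: "hamming_wt (grid n K) v = (card (K (k+1)) - l) * (\<Prod>i=k+2..n. card (K i))"
  proof -
    have "hamming_wt (grid n K) v = (\<Prod>i=1..n. card (K i - B i))"
      unfolding hamming_wt_def supp by (simp add: card_PiE)
    also have "\<dots> = (\<Prod>i=1..k. card (K i - B i)) * (card (K (k+1) - B (k+1)) * (\<Prod>i=k+2..n. card (K i - B i)))"
      by (rule prod_split3[OF kn])
    also have "(\<Prod>i=1..k. card (K i - B i)) = 1"
    proof (rule prod.neutral, rule ballI)
      fix i assume i: "i \<in> {1..k}"
      then have "K i - B i = {0}" using zK[of i] kn unfolding B_def by auto
      then show "card (K i - B i) = 1" by simp
    qed
    also have "card (K (k+1) - B (k+1)) = card (K (k+1)) - l"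
      using Bk unfolding B_def by (simp add: card_Diff_subset)
    also have "(\<Prod>i=k+2..n. card (K i - B i)) = (\<Prod>i=k+2..n. card (K i))"
      by (intro prod.cong refl) (auto simp: B_def)
    finally show ?thesis by simp
  qed
  have pos: "0 < (card (K (k+1)) - l) * (\<Prod>i=k+2..n. card (K i))"
  proof -
    have "0 < card (K (k+1))" using zK[of "k+1"] kn by (auto simp: card_gt_0_iff)
    then have "0 < card (K (k+1)) - l" using lD by linarith
    moreover have "0 < (\<Prod>i=k+2..n. card (K i))"
    proof (intro prod_pos)
      fix i assume "i \<in> {k+2..n}"
      then have "0 \<in> K i" using zK by auto
      then show "0 < card (K i)" by (auto simp: card_gt_0_iff)
    qed
    ultimately show ?thesis by simp
  qed
  have "\<exists>x\<in>grid n K. v x \<noteq> 0"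
  proof (rule ccontr)
    assume "\<not> ?thesis"
    then have "{x\<in>grid n K. v x \<noteq> 0} = {}" by auto
    then have H0: "hamming_wt (grid n K) v = 0" unfolding hamming_wt_def by simp
    have "(0::nat) < 0" using pos by (simp only: wt[symmetric] H0)
    then show False by simp
  qed
  then show ?thesis using vC wt by blast
qed



definition redv :: "nat \<Rightarrow> (nat \<Rightarrow> 'a set) \<Rightarrow> (nat \<Rightarrow> nat) \<Rightarrow> (nat \<Rightarrow> nat)" where
  "redv n K e = (\<lambda>i. if i \<in> {1..n} then redx (card (K i)) (e i) else 0)"

lemma reduce_eval:
  fixes K :: "nat \<Rightarrow> 'a::{finite,field} set"
  assumes sub: "\<forall>i\<in>{1..n}. is_subfield (K i)" and E: "finite E" and x: "x \<in> grid n K"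
  shows "evalp n E c x = evalp n (redv n K ` E) (\<lambda>e'. \<Sum>e\<in>{e\<in>E. redv n K e = e'}. c e) x"
proof -
  let ?r = "redv n K"
  have mon: "(\<Prod>i=1..n. x i ^ e i) = (\<Prod>i=1..n. x i ^ ?r e i)" for e
  proof (rule prod.cong[OF refl])
    fix i assume i: "i \<in> {1..n}"
    have "x i \<in> K i" using x i unfolding grid_def by auto
    then show "x i ^ e i = x i ^ ?r e i"
      using subfield_pow_red[of "K i" "x i" "e i"] sub i unfolding redv_def by simp
  qed
  have "evalp n E c x = (\<Sum>e\<in>E. c e * (\<Prod>i=1..n. x i ^ ?r e i))"
    unfolding evalp_def using mon by simp
  also have "\<dots> = (\<Sum>e'\<in>?r ` E. \<Sum>e\<in>{e\<in>E. ?r e = e'}. c e * (\<Prod>i=1..n. x i ^ ?r e i))"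
    by (rule sum.image_gen[OF E])
  also have "\<dots> = (\<Sum>e'\<in>?r ` E. (\<Sum>e\<in>{e\<in>E. ?r e = e'}. c e) * (\<Prod>i=1..n. x i ^ e' i))"
    by (intro sum.cong refl) (auto simp: sum_distrib_right)
  finally show ?thesis unfolding evalp_def .
qed

lemma lower:
  fixes K :: "nat \<Rightarrow> 'a::{finite,field} set"
  assumes sub: "\<forall>i\<in>{1..n}. is_subfield (K i)"
    and mono: "\<forall>i j. 1 \<le> i \<longrightarrow> i \<le> j \<longrightarrow> j \<le> n \<longrightarrow> card (K i) \<le> card (K j)"
    and kn: "k < n" and l0: "0 < l" and lD: "l \<le> card (K (k+1)) - 1"
    and dd: "d = (\<Sum>i=1..k. card (K i) - 1) + l"
    and s: "s \<in> {1..n}" and d2: "2 \<le> \<delta>"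
    and ni: "\<not>(k+2 \<le> n \<and> card (K (k+2)) \<le> card (K s))"
    and nii: "\<not>(card (K s) \<le> card (K (k+1)) \<and> 0 \<le> int (card (K s)) - (int (card (K (k+1))) - int l) \<and>
               int (card (K s)) - (int (card (K (k+1))) - int l) < int (card (K s)) - int \<delta> + 1)"
    and v: "v \<in> restricted_code n K \<delta> s d" and vnz: "\<exists>x\<in>grid n K. v x \<noteq> 0"
  shows "(card (K (k+1)) - l) * (\<Prod>i=k+2..n. card (K i)) < hamming_wt (grid n K) v"
proof -
  let ?D = "\<lambda>i. card (K i)"
  define E where "E = {e \<in> monomials_le n d. int (e s) < int (card (K s)) - int \<delta> + 1}"
  obtain c where vc: "v = (\<lambda>x\<in>grid n K. evalp n E c x)"
    using v unfolding restricted_code_def eval_code_def E_def by blast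
  have finE: "finite E" unfolding E_def using finite_monomials_le by simp
  let ?r = "redv n K"
  define E' where "E' = ?r ` E"
  define c' where "c' e' = (\<Sum>e\<in>{e\<in>E. ?r e = e'}. c e)" for e'
  have ev: "v x = evalp n E' c' x" if "x \<in> grid n K" for x
    using reduce_eval[OF sub finE that, of c] that unfolding vc E'_def c'_def by simp
  have D2: "2 \<le> ?D i" if "i \<in> {1..n}" for i using subfield_card_ge2[of "K i"] sub that by simp
  have ex: "\<exists>e\<in>E'. c' e \<noteq> 0"
  proof (rule ccontr)
    assume "\<not> ?thesis"
    then have "\<forall>x\<in>grid n K. v x = 0" using ev unfolding evalp_def by simp
    then show False using vnz by blast
  qed
  have "\<exists>a\<in>E'. c' a \<noteq> 0 \<and> (\<Prod>i=1..n. ?D i - a i) \<le> card {x\<in>grid n K. evalp n E' c' x \<noteq> 0}"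
  proof (rule footprint)
    show "finite E'" unfolding E'_def using finE by simp
    show "\<forall>e\<in>E'. \<forall>i\<in>{1..n}. e i < ?D i"
      unfolding E'_def redv_def using D2 redx_lt by auto
    show "\<forall>e1\<in>E'. \<forall>e2\<in>E'. (\<forall>i\<in>{1..n}. e1 i = e2 i) \<longrightarrow> e1 = e2"
      unfolding E'_def redv_def by (auto simp: fun_eq_iff)
    show "\<exists>e\<in>E'. c' e \<noteq> 0" by (rule ex)
  qed
  then obtain a where aE: "a \<in> E'" and aw: "(\<Prod>i=1..n. ?D i - a i) \<le> card {x\<in>grid n K. evalp n E' c' x \<noteq> 0}"
    by blast
  have wt: "hamming_wt (grid n K) v = card {x\<in>grid n K. evalp n E' c' x \<noteq> 0}"
    unfolding hamming_wt_def using ev by (intro arg_cong[where f=card]) auto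
  obtain e where e: "e \<in> E" "a = ?r e" using aE unfolding E'_def by blast
  have eM: "e \<in> monomials_le n d" and es: "int (e s) < int (?D s) - int \<delta> + 1" using e unfolding E_def by auto
  have alt: "a i < ?D i" if "i \<in> {1..n}" for i using e that D2 redx_lt unfolding redv_def by auto
  have ale: "a i \<le> e i" for i using e redx_le unfolding redv_def by auto
  have "e s < ?D s" using es d2 by linarith
  then have as: "a s = e s" using e s redx_id unfolding redv_def by auto
  define b where "b i = ?D i - a i" for i
  have "(?D (k+1) - l) * (\<Prod>i=k+2..n. ?D i) < (\<Prod>i=1..n. b i)"
  proof (rule numeric[OF mono _ _ dd kn l0 lD s _ d2 ni nii])
    show "\<forall>i\<in>{1..n}. 1 \<le> b i \<and> b i \<le> ?D i" using alt unfolding b_def by fastforce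
    have "(\<Sum>i=1..n. ?D i - b i) = (\<Sum>i=1..n. a i)"
      using alt unfolding b_def by (intro sum.cong refl) (simp add: less_imp_le)
    also have "\<dots> \<le> (\<Sum>i=1..n. e i)" using ale by (intro sum_mono) auto
    also have "\<dots> \<le> d" using eM unfolding monomials_le_def by simp
    finally show "(\<Sum>i=1..n. ?D i - b i) \<le> d" .
    show "\<delta> \<le> b s" using as es unfolding b_def by linarith
  qed
  also have "\<dots> \<le> hamming_wt (grid n K) v" using aw wt unfolding b_def by simp
  finally show ?thesis .
qed



lemma chain_sub:
  fixes K :: "nat \<Rightarrow> 'a set" and n i j :: nat
  assumes chain: "\<forall>i. 1 \<le> i \<longrightarrow> i < n \<longrightarrow> K i \<subseteq> K (i + 1)"
    and ij: "1 \<le> i" "i \<le> j" "j \<le> n"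
  shows "K i \<subseteq> K j"
  using ij(2,3)
proof (induction j rule: dec_induct)
  case base then show ?case by simp
next
  case (step j)
  have "K j \<subseteq> K (j+1)" using chain step ij(1) by auto
  then show ?case using step by auto
qed

theorem mainTheorem10:
  fixes K :: "nat \<Rightarrow> 'a::{finite,field} set"
    and n \<delta> s k l d :: nat
  assumes sub: "\<forall>i\<in>{1..n}. is_subfield (K i)"
    and chain: "\<forall>i. 1 \<le> i \<longrightarrow> i < n \<longrightarrow> K i \<subseteq> K (i + 1)"
    and n2: "n \<ge> 2"
    and delta2: "\<delta> \<ge> 2"
    and s_rng: "s \<in> {1..n}"
    and r_pos: "int (card (K s)) - int \<delta> + 1 \<ge> 1"
    and k_lt: "k < n"
    and l_pos: "0 < l" and l_le: "l \<le> card (K (k + 1)) - 1"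
    and d_def: "d = (\<Sum>i=1..k. card (K i) - 1) + l"
    and eq: "min_dist (grid n K) (restricted_code n K \<delta> s d)
             = min_dist (grid n K) (affine_cartesian_code n K d)"
  shows "(k + 2 \<le> n \<and> card (K (k + 2)) \<le> card (K s)) \<or>
         (card (K s) \<le> card (K (k + 1)) \<and>
          0 \<le> int (card (K s)) - (int (card (K (k + 1))) - int l) \<and>
          int (card (K s)) - (int (card (K (k + 1))) - int l) < int (card (K s)) - int \<delta> + 1)"
proof (rule ccontr)
  assume neg: "\<not> ?thesis"
  then have ni: "\<not>(k+2 \<le> n \<and> card (K (k+2)) \<le> card (K s))"
    and nii: "\<not>(card (K s) \<le> card (K (k+1)) \<and> 0 \<le> int (card (K s)) - (int (card (K (k+1))) - int l) \<and>
               int (card (K s)) - (int (card (K (k+1))) - int l) < int (card (K s)) - int \<delta> + 1)"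
    by auto
  have mono: "\<forall>i j. 1 \<le> i \<longrightarrow> i \<le> j \<longrightarrow> j \<le> n \<longrightarrow> card (K i) \<le> card (K j)"
  proof (intro allI impI)
    fix i j :: nat assume "1 \<le> i" "i \<le> j" "j \<le> n"
    then have "K i \<subseteq> K j" by (rule chain_sub[OF chain])
    then show "card (K i) \<le> card (K j)" by (intro card_mono) auto
  qed
  define W where "W = (card (K (k+1)) - l) * (\<Prod>i=k+2..n. card (K i))"
  let ?X = "grid n K"
  define SC where "SC = {hamming_wt ?X v | v. v \<in> affine_cartesian_code n K d \<and> (\<exists>x\<in>?X. v x \<noteq> 0)}"
  define SD where "SD = {hamming_wt ?X v | v. v \<in> restricted_code n K \<delta> s d \<and> (\<exists>x\<in>?X. v x \<noteq> 0)}"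
  have hw: "hamming_wt ?X v \<le> card ?X" for v :: "(nat \<Rightarrow> 'a) \<Rightarrow> 'a"
    unfolding hamming_wt_def by (intro card_mono) auto
  have "SC \<subseteq> {..card ?X}" unfolding SC_def using hw by blast
  then have finSC: "finite SC" by (rule finite_subset) simp
  have "SD \<subseteq> {..card ?X}" unfolding SD_def using hw by blast
  then have finSD: "finite SD" by (rule finite_subset) simp
  obtain v where v: "v \<in> affine_cartesian_code n K d" "\<exists>x\<in>?X. v x \<noteq> 0" "hamming_wt ?X v = W"
    using witness[OF sub k_lt l_le d_def] unfolding W_def by blast
  have "W \<in> SC" unfolding SC_def using v by force
  then have C: "min_dist ?X (affine_cartesian_code n K d) \<le> W"
    unfolding min_dist_def SC_def[symmetric] using finSC by (intro Min_le)
  define z :: "nat \<Rightarrow> nat" where "z = (\<lambda>_. 0)"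
  define E where "E = {e \<in> monomials_le n d. int (e s) < int (card (K s)) - int \<delta> + 1}"
  have zE: "z \<in> E" unfolding E_def monomials_le_def z_def using r_pos by auto
  define c1 where "c1 e = (if e = z then 1 else 0 :: 'a)" for e
  define v1 where "v1 = (\<lambda>x\<in>?X. evalp n E c1 x)"
  have v1D: "v1 \<in> restricted_code n K \<delta> s d"
    unfolding v1_def restricted_code_def eval_code_def E_def by blast
  have finE: "finite E" unfolding E_def using finite_monomials_le by simp
  have ev1: "evalp n E c1 x = 1" for x
  proof -
    have "evalp n E c1 x = (\<Sum>e\<in>E. if e = z then (\<Prod>i=1..n. x i ^ z i) else 0)"
      unfolding evalp_def c1_def by (intro sum.cong refl) auto
    also have "\<dots> = (\<Prod>i=1..n. x i ^ z i)" using finE zE by simp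
    also have "\<dots> = 1" unfolding z_def by simp
    finally show ?thesis .
  qed
  have "?X \<noteq> {}"
  proof -
    have "\<forall>i\<in>{1..n}. K i \<noteq> {}" using sub unfolding is_subfield_def by auto
    then show ?thesis unfolding grid_def by (simp add: PiE_eq_empty_iff)
  qed
  then obtain x0 where x0: "x0 \<in> ?X" by blast
  have "v1 x0 \<noteq> 0" using x0 ev1 unfolding v1_def by simp
  then have "hamming_wt ?X v1 \<in> SD" unfolding SD_def using v1D x0 by blast
  then have neSD: "SD \<noteq> {}" by blast
  have "W < Min SD"
    unfolding Min_gr_iff[OF finSD neSD]
  proof
    fix w assume "w \<in> SD"
    then obtain u where u: "w = hamming_wt ?X u" "u \<in> restricted_code n K \<delta> s d" "\<exists>x\<in>?X. u x \<noteq> 0"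
      unfolding SD_def by blast
    show "W < w" unfolding u(1) W_def
      by (rule lower[OF sub mono k_lt l_pos l_le d_def s_rng delta2 ni nii u(2,3)])
  qed
  then have "W < min_dist ?X (restricted_code n K \<delta> s d)" unfolding min_dist_def SD_def .
  then show False using C eq by simp
qed


end
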